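(* Let $T$ be a negative subset and $W$ a positive subset of $\mathbb{N}^2$. If a nonvanishing nonempty finite multiset $U$ on $\mathbb{N}^2$ is bounded by $T,W$, then $\mathrm{BRSK}(U)$ is bounded by $T,W$.
   Context: $\mathbb{N}$ = positive integers. For a finite multiset $U$ on $\mathbb{N}^2$, $U_{(1)}$ and $U_{(2)}$ are the multisets of first and second coordinates; $U$ is negative/positive/nonvanishing if each element $(a,b)$ has $a<b$ / $a>b$ / $a\neq b$; $U^-$, $U^+$ are the negative and positive sub-multisets; $\iota$ swaps coordinates. For equal-size finite multisets of $\mathbb{N}$, $A\le B$ iff the sorted entries satisfy $a_i\le b_i$; $A\lessdot B$ iff $A,B$ nonempty and $a_i<b_i$. For finite multisets with $|A|+|D|=|B|+|C|$, "$A-C\le B-D$" means $A\sqcup D\le B\sqcup C$. For multisets $U,V$ on $\mathbb{N}^2$, $U\le V$ means $U_{(1)}-U_{(2)}\le V_{(1)}-V_{(2)}$. A chain is a subset $\{(e_1,f_1),\dots,(e_m,f_m)\}$ of $\mathbb{N}^2$ with $e_1<\dots<e_m$ and $f_1>\dots>f_m$. A nonempty multiset $U$ on $\mathbb{N}^2$ is bounded by $T,W$ if $T\le C\le W$ for every chain $C$ contained in the underlying set of $U$. A semistandard notched bitableau $(P,Q)$ with rows $P_1,\dots,P_r$, $Q_1,\dots,Q_r$ is bounded by $T,W$ if $T_{(1)}-T_{(2)}\le P_1-Q_1$ and $P_r-Q_r\le W_{(1)}-W_{(2)}$. Notched tableau: finite sequence of left-justified, possibly empty rows of positive integers; row strict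 if rows strictly increase (rows identified with entry sets). Notched bitableau: two notched tableaux of the same shape. $(P,Q)$ semistandard: row strict and $P_1-Q_1\le\dots\le P_r-Q_r$. $\iota(P,Q)$ = rows of $(Q,P)$ in reversed order. BRSK: a row-strict $P$ is semistandard on $b$ if $P^{<b}$ (entries $\ge b$ deleted) has weakly decreasing row lengths and weakly increasing columns; $P\xleftarrow{b}a$ ($a<b$): remove entries $\ge b$, row-insert $a$ (append at the end of a row if larger than all its entries and stop; else replace the smallest entry $\ge a$ and insert the replaced entry into the next row; a row below the last is empty; the last added box is the new box), then restore the removed entries at the right ends of their rows. For negative $U=\{(a_1,b_1),\dots,(a_t,b_t)\}$ listed with $b_1\ge\dots\ge b_t$ and $a_i\ge a_{i+1}$ when $b_i=b_{i+1}$: from the empty pair, $P^{(i+1)}=P^{(i)}\xleftarrow{b_{i+1}}a_{i+1}$, and $b_{i+1}$ is placed at the left end of row $j$ of $Q^{(i)}$, $j$ the row of the new box; $\mathrm{BRSK}(U)=(P^{(t)},Q^{(t)})$. For positive $U$, $\mathrm{BRSK}(U)=\iota(\mathrm{BRSK}(\iota U))$; for nonvanishing $U$, $\mathrm{BRSK}(U)$ has the rows of $\mathrm{BRSK}(U^-)$ followed by the rows of $\mathrm{BRSK}(U^+)$. *)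

theory Defs
  imports Main "HOL-Library.Multiset" "HOL-Library.Product_Lexorder"
begin

definition mset_le :: "nat multiset \<Rightarrow> nat multiset \<Rightarrow> bool" where
  "mset_le A B \<longleftrightarrow> size A = size B \<and>
     list_all2 (\<le>) (sorted_list_of_multiset A) (sorted_list_of_multiset B)"

text \<open>"A - C \<le> B - D" means A + D \<le> B + C (disjoint union).\<close>
definition diff_le :: "nat multiset \<Rightarrow> nat multiset \<Rightarrow> nat multiset \<Rightarrow> nat multiset \<Rightarrow> bool" where
  "diff_le A C B D \<longleftrightarrow> mset_le (A + D) (B + C)"

text \<open>For multisets U, V on N^2: U \<le> V iff U_(1) - U_(2) \<le> V_(1) - V_(2).\<close>
definition pair_le :: "(nat \<times> nat) multiset \<Rightarrow> (nat \<times> nat) multiset \<Rightarrow> bool" where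
  "pair_le U V \<longleftrightarrow> diff_le (image_mset fst U) (image_mset snd U) (image_mset fst V) (image_mset snd V)"

definition negative_pairs :: "(nat \<times> nat) set \<Rightarrow> bool" where
  "negative_pairs S \<longleftrightarrow> (\<forall>(a,b)\<in>S. a < b)"

definition positive_pairs :: "(nat \<times> nat) set \<Rightarrow> bool" where
  "positive_pairs S \<longleftrightarrow> (\<forall>(a,b)\<in>S. a > b)"

definition nonvanishing_pairs :: "(nat \<times> nat) set \<Rightarrow> bool" where
  "nonvanishing_pairs S \<longleftrightarrow> (\<forall>(a,b)\<in>S. a \<noteq> b)"

definition is_chain :: "(nat \<times> nat) set \<Rightarrow> bool" where
  "is_chain C \<longleftrightarrow> finite C \<and> C \<noteq> {} \<and>
     (\<forall>p\<in>C. \<forall>q\<in>C. p \<noteq> q \<longrightarrow>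
        (fst p < fst q \<and> snd p > snd q) \<or> (fst q < fst p \<and> snd q > snd p))"

definition mset_bounded_by ::
  "(nat \<times> nat) set \<Rightarrow> (nat \<times> nat) set \<Rightarrow> (nat \<times> nat) multiset \<Rightarrow> bool" where
  "mset_bounded_by T W U \<longleftrightarrow> U \<noteq> {#} \<and>
     (\<forall>C. is_chain C \<and> C \<subseteq> set_mset U \<longrightarrow>
        pair_le (mset_set T) (mset_set C) \<and> pair_le (mset_set C) (mset_set W))"

text \<open>A notched tableau is a list of rows (lists of naturals, left to right);
  a notched bitableau is a pair of notched tableaux of the same shape.\<close>
type_synonym tableau = "nat list list"
type_synonym bitableau = "tableau \<times> tableau"

definition bitab_bounded_by ::
  "(nat \<times> nat) set \<Rightarrow> (nat \<times> nat) set \<Rightarrow> bitableau \<Rightarrow> bool" where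
  "bitab_bounded_by T W PQ \<longleftrightarrow>
     (let P = fst PQ; Q = snd PQ in
       diff_le (image_mset fst (mset_set T)) (image_mset snd (mset_set T))
               (mset (hd P)) (mset (hd Q)) \<and>
       diff_le (mset (last P)) (mset (last Q))
               (image_mset fst (mset_set W)) (image_mset snd (mset_set W)))"

definition iota_bitab :: "bitableau \<Rightarrow> bitableau" where
  "iota_bitab PQ = (rev (snd PQ), rev (fst PQ))"

text \<open>Ordinary row insertion of a into a tableau; returns the new tableau and the
  (0-based) row index of the new box.\<close>
fun row_insert :: "tableau \<Rightarrow> nat \<Rightarrow> tableau \<times> nat" where
  "row_insert [] a = ([[a]], 0)"
| "row_insert (r # rs) a =
     (case filter (\<lambda>x. a \<le> x) r of
        [] \<Rightarrow> ((r @ [a]) # rs, 0)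
      | y # _ \<Rightarrow> (let (rs', j) = row_insert rs y
                 in ((map (\<lambda>x. if x = y then a else x) r) # rs', Suc j)))"

fun restore_rows :: "tableau \<Rightarrow> tableau \<Rightarrow> tableau" where
  "restore_rows [] ss = []"
| "restore_rows (r # rs) [] = r # rs"
| "restore_rows (r # rs) (s # ss) = (r @ s) # restore_rows rs ss"

definition brsk_insert :: "nat \<Rightarrow> tableau \<Rightarrow> nat \<Rightarrow> tableau \<times> nat" where
  "brsk_insert b P a =
     (let (P', j) = row_insert (map (filter (\<lambda>x. x < b)) P) a
      in (restore_rows P' (map (filter (\<lambda>x. b \<le> x)) P), j))"

definition place_left :: "tableau \<Rightarrow> nat \<Rightarrow> nat \<Rightarrow> tableau" where
  "place_left Q j b = (if j < length Q then Q[j := b # Q ! j] else Q @ [[b]])"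

definition brsk_step :: "bitableau \<Rightarrow> nat \<times> nat \<Rightarrow> bitableau" where
  "brsk_step PQ ba =
     (let (b, a) = ba; (P', j) = brsk_insert b (fst PQ) a
      in (P', place_left (snd PQ) j b))"

text \<open>Negative U listed with b weakly decreasing, and a weakly decreasing for equal b:
  the lexicographically decreasing list of the pairs (b,a).\<close>
definition brsk_neg :: "(nat \<times> nat) multiset \<Rightarrow> bitableau" where
  "brsk_neg U = foldl brsk_step ([], []) (rev (sorted_list_of_multiset (image_mset prod.swap U)))"

definition brsk_pos :: "(nat \<times> nat) multiset \<Rightarrow> bitableau" where
  "brsk_pos U = iota_bitab (brsk_neg (image_mset prod.swap U))"

definition brsk :: "(nat \<times> nat) multiset \<Rightarrow> bitableau" where
  "brsk U =
     (let N = brsk_neg (filter_mset (\<lambda>(a,b). a < b) U);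
          Pp = brsk_pos (filter_mset (\<lambda>(a,b). a > b) U)
      in (fst N @ fst Pp, snd N @ snd Pp))"

end

theory Submission
  imports Defs
begin


definition cgel :: "nat \<Rightarrow> nat list \<Rightarrow> nat" where
  "cgel t xs = length (filter (\<lambda>x. t \<le> x) xs)"

definition cge :: "nat \<Rightarrow> nat multiset \<Rightarrow> nat" where
  "cge t X = size (filter_mset (\<lambda>x. t \<le> x) X)"

lemma cge_plus[simp]: "cge t (A + B) = cge t A + cge t B"
  by (simp add: cge_def)

lemma cge_mset[simp]: "cge t (mset xs) = cgel t xs"
  by (simp add: cge_def cgel_def flip: mset_filter)

lemma list_all2_cgel: "list_all2 (\<le>) xs ys \<Longrightarrow> cgel t xs \<le> cgel t ys"
  by (induction rule: list_all2_induct) (auto simp: cgel_def)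

lemma cgel_sorted_lower:
  assumes "sorted xs" "i < length xs"
  shows "length xs - i \<le> cgel (xs ! i) xs"
proof -
  have "{i..<length xs} \<subseteq> {j. j < length xs \<and> xs ! i \<le> xs ! j}"
    using assms by (auto simp: sorted_iff_nth_mono)
  then have "card {i..<length xs} \<le> card {j. j < length xs \<and> xs ! i \<le> xs ! j}"
    by (intro card_mono) auto
  then show ?thesis by (simp add: cgel_def length_filter_conv_card)
qed

lemma cgel_sorted_upper:
  assumes "sorted ys" "i < length ys" "ys ! i < t"
  shows "cgel t ys \<le> length ys - Suc i"
proof -
  have "{j. j < length ys \<and> t \<le> ys ! j} \<subseteq> {Suc i..<length ys}"
  proof
    fix j assume "j \<in> {j. j < length ys \<and> t \<le> ys ! j}"
    then have "j < length ys" "t \<le> ys ! j" by auto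
    moreover have "\<not> j \<le> i"
    proof
      assume "j \<le> i"
      then have "ys ! j \<le> ys ! i" using assms by (auto simp: sorted_iff_nth_mono)
      then show False using assms \<open>t \<le> ys ! j\<close> by simp
    qed
    ultimately show "j \<in> {Suc i..<length ys}" by auto
  qed
  then have "card {j. j < length ys \<and> t \<le> ys ! j} \<le> card {Suc i..<length ys}"
    by (intro card_mono) auto
  then show ?thesis by (simp add: cgel_def length_filter_conv_card)
qed

lemma mle_iff: "mset_le A B \<longleftrightarrow> size A = size B \<and> (\<forall>t. cge t A \<le> cge t B)"
proof
  assume h: "mset_le A B"
  then have "list_all2 (\<le>) (sorted_list_of_multiset A) (sorted_list_of_multiset B)"
    by (simp add: mset_le_def)
  then have "cgel t (sorted_list_of_multiset A) \<le> cgel t (sorted_list_of_multiset B)" for t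
    by (rule list_all2_cgel)
  then show "size A = size B \<and> (\<forall>t. cge t A \<le> cge t B)"
    using h by (metis cge_mset mset_le_def mset_sorted_list_of_multiset)
next
  assume h: "size A = size B \<and> (\<forall>t. cge t A \<le> cge t B)"
  define xs where "xs = sorted_list_of_multiset A"
  define ys where "ys = sorted_list_of_multiset B"
  have len: "length xs = length ys" using h
    by (metis xs_def ys_def mset_sorted_list_of_multiset size_mset)
  have sx: "sorted xs" and sy: "sorted ys" by (auto simp: xs_def ys_def)
  have c: "cgel t xs \<le> cgel t ys" for t
    using h by (metis cge_mset xs_def ys_def mset_sorted_list_of_multiset)
  have "\<forall>i<length xs. xs ! i \<le> ys ! i"
  proof (intro allI impI, rule ccontr)
    fix i assume i: "i < length xs" and n: "\<not> xs ! i \<le> ys ! i"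
    have "length xs - i \<le> cgel (xs ! i) xs" using sx i by (rule cgel_sorted_lower)
    also have "\<dots> \<le> cgel (xs ! i) ys" by (rule c)
    also have "\<dots> \<le> length ys - Suc i" using sy i len n by (intro cgel_sorted_upper) auto
    finally show False using i len by simp
  qed
  then have "list_all2 (\<le>) xs ys" using len by (simp add: list_all2_conv_all_nth)
  then show "mset_le A B" using h by (simp add: mset_le_def xs_def ys_def)
qed



definition rowof :: "tableau \<Rightarrow> nat \<Rightarrow> nat list" where
  "rowof P i = (if i < length P then P ! i else [])"

lemma rowof_Nil[simp]: "rowof [] i = []" by (simp add: rowof_def)
lemma rowof_Cons0[simp]: "rowof (r # rs) 0 = r" by (simp add: rowof_def)
lemma rowof_ConsS[simp]: "rowof (r # rs) (Suc i) = rowof rs i" by (simp add: rowof_def)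
lemma rowof_map_filter[simp]: "rowof (map (filter g) P) i = filter g (rowof P i)"
  by (simp add: rowof_def)

lemma cgel_append[simp]: "cgel t (xs @ ys) = cgel t xs + cgel t ys"
  by (simp add: cgel_def)
lemma cgel_Cons[simp]: "cgel t (x # xs) = (if t \<le> x then 1 else 0) + cgel t xs"
  by (simp add: cgel_def)
lemma cgel_Nil[simp]: "cgel t [] = 0"
  by (simp add: cgel_def)

lemma cgel_map_le: "(\<And>x. x \<in> set xs \<Longrightarrow> f x \<le> x) \<Longrightarrow> cgel t (map f xs) \<le> cgel t xs"
  by (induction xs) (auto, fastforce+)

lemma cgel_split: "cgel t (filter (\<lambda>x. x < b) xs) + cgel t (filter (\<lambda>x. b \<le> x) xs) = cgel t xs"
  by (induction xs) auto

lemma row_insert_len: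
  "row_insert rs a = (rs', j) \<Longrightarrow> length rs' = length rs + (if j = length rs then 1 else 0) \<and> j \<le> length rs"
proof (induction rs arbitrary: a rs' j)
  case Nil then show ?case by auto
next
  case (Cons r rs)
  show ?case
  proof (cases "filter (\<lambda>x. a \<le> x) r")
    case Nil then show ?thesis using Cons.prems by auto
  next
    case (Cons y ys)
    obtain rs2 j2 where e: "row_insert rs y = (rs2, j2)" by (cases "row_insert rs y")
    then show ?thesis using Cons Cons.IH[OF e] Cons.prems by (auto split: if_splits)
  qed
qed

lemma row_insert_rows:
  "row_insert rs a = (rs', j) \<Longrightarrow> a < b \<Longrightarrow> (\<forall>r\<in>set rs. \<forall>x\<in>set r. x < b) \<Longrightarrow>
   cgel t (rowof rs' i) \<le> cgel t (rowof rs i) + (if i = j \<and> t \<le> b then 1 else 0) \<and>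
   length (rowof rs' i) = length (rowof rs i) + (if i = j then 1 else 0)"
proof (induction rs arbitrary: a rs' j i)
  case Nil then show ?case by (cases i) (auto simp: rowof_def)
next
  case (Cons r rs)
  show ?case
  proof (cases "filter (\<lambda>x. a \<le> x) r")
    case Nil then show ?thesis using Cons.prems by (cases i) auto
  next
    case (Cons y ys)
    obtain rs2 j2 where e: "row_insert rs y = (rs2, j2)" by (cases "row_insert rs y")
    have yr: "y \<in> set r" "a \<le> y" using Cons by (metis filter_eq_ConsD in_set_conv_decomp)+
    then have yb: "y < b" using Cons.prems by auto
    have rs': "rs' = map (\<lambda>x. if x = y then a else x) r # rs2" "j = Suc j2"
      using Cons.prems Cons e by auto
    show ?thesis
    proof (cases i)
      case 0
      have "cgel t (map (\<lambda>x. if x = y then a else x) r) \<le> cgel t r"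
        by (rule cgel_map_le) (use yr in auto)
      then show ?thesis using rs' 0 by simp
    next
      case (Suc k)
      then show ?thesis using Cons.IH[OF e yb] Cons.prems rs' by auto
    qed
  qed
qed

lemma restore_len: "length S \<le> length P \<Longrightarrow> length (restore_rows P S) = length P"
  by (induction P S rule: restore_rows.induct) auto

lemma restore_rowof: "length S \<le> length P \<Longrightarrow> rowof (restore_rows P S) i = rowof P i @ rowof S i"
proof (induction P S arbitrary: i rule: restore_rows.induct)
  case (3 r rs s ss)
  then show ?case by (cases i) auto
qed auto



lemma brsk_insert_props:
  assumes "brsk_insert b P a = (P2, j)" "a < b"
  shows "length P2 = length P + (if j = length P then 1 else 0)" "j \<le> length P"
    "cgel t (rowof P2 i) \<le> cgel t (rowof P i) + (if i = j \<and> t \<le> b then 1 else 0)"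
    "length (rowof P2 i) = length (rowof P i) + (if i = j then 1 else 0)"
proof -
  obtain P1 j1 where e: "row_insert (map (filter (\<lambda>x. x < b)) P) a = (P1, j1)"
    by (cases "row_insert (map (filter (\<lambda>x. x < b)) P) a")
  have P2: "P2 = restore_rows P1 (map (filter (\<lambda>x. b \<le> x)) P)" "j = j1"
    using assms(1) e by (auto simp: brsk_insert_def)
  note L = row_insert_len[OF e]
  have ll: "length (map (filter (\<lambda>x. b \<le> x)) P) \<le> length P1" using L by simp
  show "length P2 = length P + (if j = length P then 1 else 0)" "j \<le> length P"
    using L P2 restore_len[OF ll] by auto
  have R: "cgel t (rowof P1 i) \<le> cgel t (filter (\<lambda>x. x < b) (rowof P i)) + (if i = j \<and> t \<le> b then 1 else 0) \<and>
   length (rowof P1 i) = length (filter (\<lambda>x. x < b) (rowof P i)) + (if i = j then 1 else 0)"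
    using row_insert_rows[OF e assms(2), of t i] P2 by auto
  have ri: "rowof P2 i = rowof P1 i @ filter (\<lambda>x. b \<le> x) (rowof P i)"
    using P2 restore_rowof[OF ll] by simp
  show "cgel t (rowof P2 i) \<le> cgel t (rowof P i) + (if i = j \<and> t \<le> b then 1 else 0)"
    using R ri cgel_split[of t b "rowof P i"] by simp
  have "length (filter (\<lambda>x. x < b) (rowof P i)) + length (filter (\<lambda>x. b \<le> x) (rowof P i)) = length (rowof P i)"
    using sum_length_filter_compl[of "\<lambda>x. x < b" "rowof P i"] by (simp add: not_less)
  then show "length (rowof P2 i) = length (rowof P i) + (if i = j then 1 else 0)"
    using R ri by simp
qed

lemma place_left_len: "j \<le> length Q \<Longrightarrow> length (place_left Q j b) = length Q + (if j = length Q then 1 else 0)"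
  by (auto simp: place_left_def)

lemma place_left_rowof: "j \<le> length Q \<Longrightarrow> rowof (place_left Q j b) i = (if i = j then b # rowof Q i else rowof Q i)"
  by (auto simp: place_left_def rowof_def nth_append)

definition invL :: "bitableau \<Rightarrow> bool" where
  "invL PQ \<longleftrightarrow> length (fst PQ) = length (snd PQ) \<and>
     (\<forall>i t. cgel t (rowof (fst PQ) i) \<le> cgel t (rowof (snd PQ) i)) \<and>
     (\<forall>i. length (rowof (fst PQ) i) = length (rowof (snd PQ) i))"

lemma brsk_step_eq:
  assumes "brsk_insert b P a = (P2, j)"
  shows "brsk_step (P, Q) (b, a) = (P2, place_left Q j b)"
  using assms by (simp add: brsk_step_def)

lemma invL_step:
  assumes "invL (P, Q)" "a < b"
  shows "invL (brsk_step (P, Q) (b, a)) \<and> length (fst (brsk_step (P, Q) (b, a))) \<ge> max 1 (length P)"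
proof -
  obtain P2 j where e: "brsk_insert b P a = (P2, j)" by (cases "brsk_insert b P a")
  note bi = brsk_insert_props[OF e assms(2)]
  have lq: "length P = length Q" using assms by (simp add: invL_def)
  have jq: "j \<le> length Q" using bi lq by simp
  have "invL (P2, place_left Q j b)"
    unfolding invL_def
  proof (intro conjI allI)
    show "length (fst (P2, place_left Q j b)) = length (snd (P2, place_left Q j b))"
      using bi(1) place_left_len[OF jq] lq by simp
    fix i t
    show "cgel t (rowof (fst (P2, place_left Q j b)) i) \<le> cgel t (rowof (snd (P2, place_left Q j b)) i)"
    proof -
      have h: "cgel t (rowof P i) \<le> cgel t (rowof Q i)" using assms(1) by (simp add: invL_def)
      show ?thesis using bi(3)[of t i] place_left_rowof[OF jq, of b i] h by (auto split: if_splits)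
    qed
  next
    fix i
    show "length (rowof (fst (P2, place_left Q j b)) i) = length (rowof (snd (P2, place_left Q j b)) i)"
      using bi(4)[of i] place_left_rowof[OF jq, of b i] assms(1) by (auto simp: invL_def)
  qed
  moreover have "length P2 \<ge> max 1 (length P)" using bi(1,2) by auto
  ultimately show ?thesis using brsk_step_eq[OF e] by simp
qed

lemma invL_foldl:
  "invL PQ \<Longrightarrow> (\<forall>p\<in>set L. snd p < fst p) \<Longrightarrow>
   invL (foldl brsk_step PQ L) \<and> (L \<noteq> [] \<longrightarrow> fst (foldl brsk_step PQ L) \<noteq> [])"
proof (induction L arbitrary: PQ)
  case Nil then show ?case by simp
next
  case (Cons p L)
  obtain P Q where pq: "PQ = (P, Q)" by (cases PQ)
  obtain b a where p: "p = (b, a)" by (cases p)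
  have s: "invL (brsk_step PQ p) \<and> fst (brsk_step PQ p) \<noteq> []"
    using invL_step[of P Q a b] Cons.prems pq p by auto
  show ?case
  proof (cases "L = []")
    case True then show ?thesis using s by simp
  next
    case False then show ?thesis using Cons.IH[of "brsk_step PQ p"] s Cons.prems by simp
  qed
qed



definition row1_step :: "nat list \<times> nat list \<Rightarrow> nat \<times> nat \<Rightarrow> nat list \<times> nat list" where
 "row1_step RS ba = (case RS of (R, S) \<Rightarrow> case ba of (b, a) \<Rightarrow>
   (case filter (\<lambda>x. a \<le> x) (filter (\<lambda>x. x < b) R) of
      [] \<Rightarrow> (filter (\<lambda>x. x < b) R @ [a] @ filter (\<lambda>x. b \<le> x) R, b # S)
    | y # _ \<Rightarrow> (map (\<lambda>x. if x = y then a else x) (filter (\<lambda>x. x < b) R) @ filter (\<lambda>x. b \<le> x) R, S)))"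

lemma row1_proj:
  assumes "length P = length Q"
  shows "(rowof (fst (brsk_step (P, Q) (b, a))) 0, rowof (snd (brsk_step (P, Q) (b, a))) 0)
         = row1_step (rowof P 0, rowof Q 0) (b, a)"
proof (cases P)
  case Nil
  then have "Q = []" using assms by simp
  then show ?thesis using Nil
    by (simp add: brsk_step_def brsk_insert_def place_left_def row1_step_def)
next
  case (Cons r rs)
  then obtain q qs where Q: "Q = q # qs" using assms by (cases Q) auto
  show ?thesis
  proof (cases "filter (\<lambda>x. a \<le> x) (filter (\<lambda>x. x < b) r)")
    case Nil
    then show ?thesis using Cons Q
      by (simp add: brsk_step_def brsk_insert_def place_left_def row1_step_def)
  next
    case (Cons y ys)
    obtain rs2 j2 where e: "row_insert (map (filter (\<lambda>x. x < b)) rs) y = (rs2, j2)"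
      by (cases "row_insert (map (filter (\<lambda>x. x < b)) rs) y")
    show ?thesis using Cons \<open>P = r # rs\<close> Q e
      by (simp add: brsk_step_def brsk_insert_def place_left_def row1_step_def)
  qed
qed

lemma row1_foldl:
  "invL PQ \<Longrightarrow> (\<forall>p\<in>set L. snd p < fst p) \<Longrightarrow>
   (rowof (fst (foldl brsk_step PQ L)) 0, rowof (snd (foldl brsk_step PQ L)) 0)
   = foldl row1_step (rowof (fst PQ) 0, rowof (snd PQ) 0) L"
proof (induction L arbitrary: PQ)
  case Nil then show ?case by simp
next
  case (Cons p L)
  obtain P Q where pq: "PQ = (P, Q)" by (cases PQ)
  obtain b a where p: "p = (b, a)" by (cases p)
  have s: "invL (brsk_step PQ p)"
    using invL_step[of P Q a b] Cons.prems pq p by auto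
  have "length P = length Q" using Cons.prems pq by (simp add: invL_def)
  then show ?case using Cons.IH[OF s] Cons.prems row1_proj[of P Q b a] pq p by simp
qed



definition cltl :: "nat \<Rightarrow> nat list \<Rightarrow> nat" where
  "cltl u xs = length (filter (\<lambda>x. x < u) xs)"

lemma cltl_append[simp]: "cltl u (xs @ ys) = cltl u xs + cltl u ys"
  by (simp add: cltl_def)
lemma cltl_Cons[simp]: "cltl u (x # xs) = (if x < u then 1 else 0) + cltl u xs"
  by (simp add: cltl_def)
lemma cltl_Nil[simp]: "cltl u [] = 0"
  by (simp add: cltl_def)
lemma cltl_zero: "(\<forall>x\<in>set xs. u \<le> x) \<Longrightarrow> cltl u xs = 0"
  by (induction xs) auto
lemma cgel_zero: "(\<forall>x\<in>set xs. x < t) \<Longrightarrow> cgel t xs = 0"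
  by (induction xs) auto
lemma cltl_mono: "(\<forall>x\<in>set xs. x < u \<longrightarrow> x < v) \<Longrightarrow> cltl u xs \<le> cltl v xs"
  by (induction xs) auto

lemma split_sorted: "sorted_wrt (<) R \<Longrightarrow> filter (\<lambda>x. x < b) R @ filter (\<lambda>x. (b::nat) \<le> x) R = R"
proof (induction R)
  case Nil then show ?case by simp
next
  case (Cons x R)
  show ?case
  proof (cases "x < b")
    case True then show ?thesis using Cons by auto
  next
    case False
    then have "\<forall>z\<in>set R. b \<le> z" using Cons.prems by auto
    then have "filter (\<lambda>x. x < b) R = []" "filter (\<lambda>x. b \<le> x) R = R" by (auto simp: filter_empty_conv)
    then show ?thesis using False by auto
  qed
qed

lemma chain_single: "is_chain {p}" by (simp add: is_chain_def)

lemma chain_insert: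
  assumes "is_chain C" "\<forall>p\<in>C. fst p < a \<and> b < snd p"
  shows "is_chain (insert (a, b) C) \<and> card (insert (a, b) C) = card C + 1"
proof -
  have fin: "finite C" using assms by (simp add: is_chain_def)
  have "(a, b) \<notin> C" using assms by auto
  then show ?thesis using assms fin unfolding is_chain_def by auto
qed

definition Jinv :: "nat \<Rightarrow> (nat \<times> nat) set \<Rightarrow> nat list \<Rightarrow> bool" where
  "Jinv t X R \<longleftrightarrow> (\<forall>u\<le>t. 0 < cltl u R \<longrightarrow>
     (\<exists>C. is_chain C \<and> C \<subseteq> X \<and> cltl u R \<le> card C \<and> (\<forall>p\<in>C. fst p < u \<and> t \<le> snd p)))"

lemma extend:
  assumes J: "Jinv t X R" and sep: "\<forall>p\<in>X. b \<le> snd p \<and> (snd p = b \<longrightarrow> a \<le> fst p)"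
    and tb: "t \<le> b" and au: "a < u" and ut: "u \<le> t"
    and lt: "\<forall>x\<in>set R. x < u \<longrightarrow> x < a"
  shows "\<exists>C. is_chain C \<and> C \<subseteq> insert (a, b) X \<and> cltl u R + 1 \<le> card C \<and> (\<forall>p\<in>C. fst p < u \<and> t \<le> snd p)"
proof (cases "cltl u R = 0")
  case True
  then show ?thesis using chain_single[of "(a,b)"] au tb by (intro exI[of _ "{(a,b)}"]) auto
next
  case False
  have "cltl u R \<le> cltl a R" using lt by (rule cltl_mono)
  then obtain C where C: "is_chain C" "C \<subseteq> X" "cltl a R \<le> card C" "\<forall>p\<in>C. fst p < a \<and> t \<le> snd p"
    using J False au ut unfolding Jinv_def by (metis gr0I le_0_eq less_imp_le_nat order_trans)
  have "\<forall>p\<in>C. fst p < a \<and> b < snd p"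
  proof
    fix p assume "p \<in> C"
    then have "fst p < a" "b \<le> snd p" "snd p = b \<longrightarrow> a \<le> fst p" using C sep by auto
    then show "fst p < a \<and> b < snd p" by auto
  qed
  then have "is_chain (insert (a, b) C) \<and> card (insert (a, b) C) = card C + 1"
    using chain_insert C(1) by blast
  then show ?thesis using C \<open>cltl u R \<le> cltl a R\<close> au tb
    by (intro exI[of _ "insert (a,b) C"]) auto
qed

lemma step_cases:
  assumes "sorted_wrt (<) R" "a < b"
  obtains (App) "fst (row1_step (R, S) (b, a)) = filter (\<lambda>x. x < b) R @ a # filter (\<lambda>x. b \<le> x) R"
      "snd (row1_step (R, S) (b, a)) = b # S"
      "R = filter (\<lambda>x. x < b) R @ filter (\<lambda>x. b \<le> x) R"
      "\<forall>x\<in>set (filter (\<lambda>x. x < b) R). x < a"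
  | (Rep) us y vs where "fst (row1_step (R, S) (b, a)) = us @ a # vs @ filter (\<lambda>x. b \<le> x) R"
      "snd (row1_step (R, S) (b, a)) = S"
      "R = us @ y # vs @ filter (\<lambda>x. b \<le> x) R"
      "filter (\<lambda>x. x < b) R = us @ y # vs"
      "\<forall>x\<in>set us. x < a" "a \<le> y"
proof (cases "filter (\<lambda>x. a \<le> x) (filter (\<lambda>x. x < b) R)")
  case Nil
  show ?thesis
    apply (rule App)
    using Nil split_sorted[OF assms(1), of b] by (auto simp: row1_step_def filter_empty_conv)
next
  case (Cons y ys)
  obtain us vs where d: "filter (\<lambda>x. x < b) R = us @ y # vs" "\<forall>u\<in>set us. \<not> a \<le> u" "a \<le> y"
    using filter_eq_ConsD[OF Cons] by blast
  have sr: "sorted_wrt (<) (us @ y # vs)" using d(1) assms(1) by (metis sorted_wrt_filter)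
  have m1: "map (\<lambda>x. if x = y then a else x) us = us" using d by (intro map_idI) auto
  have m2: "map (\<lambda>x. if x = y then a else x) vs = vs" using sr by (intro map_idI) (auto simp: sorted_wrt_append)
  have "fst (row1_step (R, S) (b, a)) = us @ a # vs @ filter (\<lambda>x. b \<le> x) R"
    using Cons d m1 m2 by (simp add: row1_step_def del: filter_filter)
  moreover have "snd (row1_step (R, S) (b, a)) = S" using Cons by (simp add: row1_step_def)
  moreover have "R = us @ y # vs @ filter (\<lambda>x. b \<le> x) R"
    using split_sorted[OF assms(1), of b] d by simp
  ultimately show ?thesis
    apply -
    apply (rule Rep[of us vs y])
    using d by auto
qed

lemma sorted_step:
  assumes "sorted_wrt (<) R" "a < b"
  shows "sorted_wrt (<) (fst (row1_step (R, S) (b, a)))"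
proof (rule step_cases[OF assms, of S], goal_cases)
  case 1
  note App = 1
  have "sorted_wrt (<) (filter (\<lambda>x. x < b) R)" "sorted_wrt (<) (filter (\<lambda>x. b \<le> x) R)"
    using assms(1) by (auto intro: sorted_wrt_filter)
  then show ?thesis using App assms(1,2) by (auto simp: sorted_wrt_append)
next
  case (2 us y vs)
  note Rep = 2
  have s: "sorted_wrt (<) (us @ y # vs @ filter (\<lambda>x. b \<le> x) R)" using Rep assms(1) by simp
  have "y \<in> set (filter (\<lambda>x. x < b) R)" using Rep(4) by simp
  then have yb: "y < b" by simp
  have "\<forall>x\<in>set vs. y < x" using s by (simp add: sorted_wrt_append)
  then have "\<forall>x\<in>set vs. a < x" using Rep(6) by auto
  then show ?thesis using Rep(1,5,6) s assms(2) yb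
    by (auto simp: sorted_wrt_append)
qed



lemma J_step:
  assumes sR: "sorted_wrt (<) R" and ab: "a < b" and tb: "t \<le> b" and J: "Jinv t X R"
    and sep: "\<forall>p\<in>X. b \<le> snd p \<and> (snd p = b \<longrightarrow> a \<le> fst p)"
  shows "Jinv t (insert (a, b) X) (fst (row1_step (R, S) (b, a)))"
proof (rule step_cases[OF sR ab, of S], goal_cases)
  case 1
  define r where "r = filter (\<lambda>x. x < b) R"
  define w where "w = filter (\<lambda>x. b \<le> x) R"
  have R': "fst (row1_step (R, S) (b, a)) = r @ a # w" using 1(1) unfolding r_def w_def by simp
  have R: "R = r @ w" using 1(3) unfolding r_def w_def .
  have ra: "\<forall>x\<in>set r. x < a" using 1(4) unfolding r_def .
  have wb: "\<forall>x\<in>set w. b \<le> x" by (simp add: w_def)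
  show ?case unfolding Jinv_def
  proof (intro allI impI)
    fix u assume ut: "u \<le> t" and pos: "0 < cltl u (fst (row1_step (R, S) (b, a)))"
    have w0: "cltl u w = 0" using wb ut tb by (intro cltl_zero) auto
    show "\<exists>C. is_chain C \<and> C \<subseteq> insert (a, b) X \<and> cltl u (fst (row1_step (R, S) (b, a))) \<le> card C \<and> (\<forall>p\<in>C. fst p < u \<and> t \<le> snd p)"
    proof (cases "a < u")
      case True
      have lt: "\<forall>x\<in>set R. x < u \<longrightarrow> x < a"
        using R ra wb ut tb by auto
      have "cltl u (fst (row1_step (R, S) (b, a))) = cltl u R + 1" using R' R w0 True by simp
      then show ?thesis using extend[OF J sep tb True ut lt] by simp
    next
      case False
      have e: "cltl u (fst (row1_step (R, S) (b, a))) = cltl u R" using R' R w0 False by simp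
      then obtain C where "is_chain C" "C \<subseteq> X" "cltl u R \<le> card C" "\<forall>p\<in>C. fst p < u \<and> t \<le> snd p"
        using J pos ut unfolding Jinv_def by auto
      then show ?thesis using e by (intro exI[of _ C]) auto
    qed
  qed
next
  case (2 us y vs)
  define w where "w = filter (\<lambda>x. b \<le> x) R"
  have R': "fst (row1_step (R, S) (b, a)) = us @ a # vs @ w" using 2(1) unfolding w_def .
  have R: "R = us @ y # vs @ w" using 2(3) unfolding w_def .
  have usa: "\<forall>x\<in>set us. x < a" and ay: "a \<le> y" using 2(5,6) by auto
  have wb: "\<forall>x\<in>set w. b \<le> x" by (simp add: w_def)
  have "sorted_wrt (<) (us @ y # vs @ w)" using sR R by simp
  then have yvs: "\<forall>x\<in>set vs. y < x" by (simp add: sorted_wrt_append)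
  show ?case unfolding Jinv_def
  proof (intro allI impI)
    fix u assume ut: "u \<le> t" and pos: "0 < cltl u (fst (row1_step (R, S) (b, a)))"
    have w0: "cltl u w = 0" using wb ut tb by (intro cltl_zero) auto
    show "\<exists>C. is_chain C \<and> C \<subseteq> insert (a, b) X \<and> cltl u (fst (row1_step (R, S) (b, a))) \<le> card C \<and> (\<forall>p\<in>C. fst p < u \<and> t \<le> snd p)"
    proof (cases "a < u \<and> \<not> y < u")
      case True
      have lt: "\<forall>x\<in>set R. x < u \<longrightarrow> x < a"
      proof (intro ballI impI)
        fix x assume x: "x \<in> set R" "x < u"
        then have "x \<in> set us \<or> x = y \<or> x \<in> set vs \<or> x \<in> set w" using R by auto
        then show "x < a" using usa True yvs wb x ut tb by fastforce
      qed
      have "cltl u (fst (row1_step (R, S) (b, a))) = cltl u R + 1" using R' R w0 True by simp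
      then show ?thesis using extend[OF J sep tb _ ut lt] True by simp
    next
      case False
      have e: "cltl u (fst (row1_step (R, S) (b, a))) = cltl u R" using R' R w0 False ay by auto
      then obtain C where "is_chain C" "C \<subseteq> X" "cltl u R \<le> card C" "\<forall>p\<in>C. fst p < u \<and> t \<le> snd p"
        using J pos ut unfolding Jinv_def by auto
      then show ?thesis using e by (intro exI[of _ C]) auto
    qed
  qed
qed

lemma len_step:
  assumes "sorted_wrt (<) R" "a < b"
  shows "length (fst (row1_step (R, S) (b, a))) + length S = length R + length (snd (row1_step (R, S) (b, a)))
     \<and> set (snd (row1_step (R, S) (b, a))) \<subseteq> insert b (set S)"
proof (rule step_cases[OF assms, of S], goal_cases)
  case 1
  have "length R = length (filter (\<lambda>x. x < b) R @ filter (\<lambda>x. b \<le> x) R)" using 1(3) by simp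
  then show ?case using 1(1,2) by auto
next
  case (2 us y vs)
  have "length R = length (us @ y # vs @ filter (\<lambda>x. b \<le> x) R)" using 2(3) by simp
  then show ?case using 2(1,2) by auto
qed

definition Inv1 :: "nat \<Rightarrow> (nat \<times> nat) list \<Rightarrow> nat list \<times> nat list \<Rightarrow> bool" where
  "Inv1 t L RS \<longleftrightarrow> sorted_wrt (<) (fst RS) \<and> length (fst RS) = length (snd RS) \<and>
     (\<forall>s\<in>set (snd RS). t \<le> s) \<and> Jinv t {(a, b). (b, a) \<in> set L} (fst RS)"

lemma phase1:
  "sorted_wrt (\<ge>) L \<Longrightarrow> \<forall>p\<in>set L. snd p < fst p \<and> t \<le> fst p \<Longrightarrow> Inv1 t L (foldl row1_step ([], []) L)"
proof (induction L rule: rev_induct)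
  case Nil then show ?case by (simp add: Inv1_def Jinv_def)
next
  case (snoc p L)
  obtain b a where p: "p = (b, a)" by (cases p)
  obtain R S where RS: "foldl row1_step ([], []) L = (R, S)" by (cases "foldl row1_step ([], []) L")
  have IH: "Inv1 t L (R, S)" using snoc RS by (simp add: sorted_wrt_append)
  have ab: "a < b" "t \<le> b" using snoc.prems p by auto
  have ge: "\<forall>q\<in>set L. (b, a) \<le> q" using snoc.prems(1) p by (simp add: sorted_wrt_append)
  have sep: "\<forall>q\<in>{(a, b). (b, a) \<in> set L}. b \<le> snd q \<and> (snd q = b \<longrightarrow> a \<le> fst q)"
  proof
    fix q assume "q \<in> {(a, b). (b, a) \<in> set L}"
    then have "(snd q, fst q) \<in> set L" by auto
    then have "(b, a) \<le> (snd q, fst q)" using ge by blast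
    then show "b \<le> snd q \<and> (snd q = b \<longrightarrow> a \<le> fst q)" by auto
  qed
  have sR: "sorted_wrt (<) R" using IH by (simp add: Inv1_def)
  have J: "Jinv t {(a, b). (b, a) \<in> set L} R" using IH by (simp add: Inv1_def)
  have J': "Jinv t (insert (a, b) {(a, b). (b, a) \<in> set L}) (fst (row1_step (R, S) (b, a)))"
    by (rule J_step[OF sR ab J sep])
  have X: "{(a', b'). (b', a') \<in> set (L @ [p])} = insert (a, b) {(a, b). (b, a) \<in> set L}"
    using p by auto
  have "foldl row1_step ([], []) (L @ [p]) = row1_step (R, S) (b, a)" using RS p by simp
  then show ?case using J' X sorted_step[OF sR ab(1)] len_step[OF sR ab(1), of S] IH ab
    unfolding Inv1_def by auto
qed

lemma phase2:
  "\<forall>p\<in>set L. snd p < fst p \<and> fst p < t \<Longrightarrow>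
   cgel t (fst (foldl row1_step RS L)) = cgel t (fst RS) \<and> cgel t (snd (foldl row1_step RS L)) = cgel t (snd RS)"
proof (induction L arbitrary: RS)
  case Nil then show ?case by simp
next
  case (Cons p L)
  obtain b a where p: "p = (b, a)" by (cases p)
  obtain R S where RS: "RS = (R, S)" by (cases RS)
  have ab: "a < b" "b < t" using Cons.prems p by auto
  have sp: "cgel t R = cgel t (filter (\<lambda>x. b \<le> x) R)"
    using cgel_split[of t b R] cgel_zero[of "filter (\<lambda>x. x < b) R" t] ab by auto
  have "cgel t (fst (row1_step (R, S) (b, a))) = cgel t R \<and> cgel t (snd (row1_step (R, S) (b, a))) = cgel t S"
  proof (cases "filter (\<lambda>x. a \<le> x) (filter (\<lambda>x. x < b) R)")
    case Nil
    have "cgel t (filter (\<lambda>x. x < b) R) = 0" using ab by (intro cgel_zero) auto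
    then show ?thesis using Nil sp ab by (simp add: row1_step_def del: filter_filter)
  next
    case (Cons y ys)
    have "cgel t (map (\<lambda>x. if x = y then a else x) (filter (\<lambda>x. x < b) R)) = 0" using ab by (intro cgel_zero) auto
    then show ?thesis using Cons sp ab by (simp add: row1_step_def del: filter_filter)
  qed
  then show ?case using Cons.IH[of "row1_step RS p"] Cons.prems RS p by simp
qed



lemma cgel_all: "(\<forall>s\<in>set S. t \<le> s) \<Longrightarrow> cgel t S = length S"
  by (simp add: cgel_def)

lemma len_split: "length R = cgel t R + cltl t R"
  using sum_length_filter_compl[of "\<lambda>x. t \<le> x" R] by (simp add: cgel_def cltl_def not_le)

lemma drop_lt: "sorted_wrt (\<ge>) L \<Longrightarrow> p \<in> set (dropWhile (\<lambda>p. t \<le> fst p) L) \<Longrightarrow> fst p < (t::nat)"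
proof (induction L)
  case Nil then show ?case by simp
next
  case (Cons x L)
  show ?case
  proof (cases "t \<le> fst x")
    case True then show ?thesis using Cons by simp
  next
    case False
    then have "p = x \<or> p \<in> set L" using Cons.prems by auto
    then show ?thesis
    proof
      assume "p \<in> set L"
      then have "p \<le> x" using Cons.prems(1) by simp
      then have "fst p \<le> fst x" by (cases p, cases x) auto
      then show ?thesis using False by simp
    qed (use False in simp)
  qed
qed

lemma rowof_hd: "P \<noteq> [] \<Longrightarrow> rowof P 0 = hd P"
  by (cases P) auto

lemma K:
  fixes V :: "(nat \<times> nat) multiset" and h h' :: "nat \<Rightarrow> nat"
  assumes neg: "\<forall>p\<in>#V. fst p < snd p" and ne: "V \<noteq> {#}"
    and ch: "\<And>C t. is_chain C \<Longrightarrow> C \<subseteq> set_mset V \<Longrightarrow> (\<forall>p\<in>C. fst p < t \<and> t \<le> snd p) \<Longrightarrow> h t + card C \<le> h' t"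
    and hh: "\<And>t. h t \<le> h' t"
  shows "h t + cgel t (hd (snd (brsk_neg V))) \<le> cgel t (hd (fst (brsk_neg V))) + h' t"
    and "length (hd (fst (brsk_neg V))) = length (hd (snd (brsk_neg V)))"
    and "fst (brsk_neg V) \<noteq> []" and "snd (brsk_neg V) \<noteq> []" and "invL (brsk_neg V)"
proof -
  define L where "L = rev (sorted_list_of_multiset (image_mset prod.swap V))"
  have bn: "brsk_neg V = foldl brsk_step ([], []) L" by (simp add: brsk_neg_def L_def)
  have setL: "set L = prod.swap ` set_mset V" by (simp add: L_def)
  have negL: "\<forall>p\<in>set L. snd p < fst p" using neg setL by auto
  have Lne: "L \<noteq> []" using ne setL by auto
  have sL: "sorted_wrt (\<ge>) L" by (simp add: L_def sorted_wrt_rev)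
  have i0: "invL ([], [])" by (simp add: invL_def)
  have iv: "invL (brsk_neg V)" and fne: "fst (brsk_neg V) \<noteq> []"
    using invL_foldl[OF i0 negL] Lne bn by auto
  show "invL (brsk_neg V)" "fst (brsk_neg V) \<noteq> []" by fact+
  have lq: "length (fst (brsk_neg V)) = length (snd (brsk_neg V))" using iv by (simp add: invL_def)
  show sne: "snd (brsk_neg V) \<noteq> []" using fne lq by auto
  show "length (hd (fst (brsk_neg V))) = length (hd (snd (brsk_neg V)))"
  proof -
    have "length (rowof (fst (brsk_neg V)) 0) = length (rowof (snd (brsk_neg V)) 0)"
      using iv by (simp add: invL_def)
    then show ?thesis using rowof_hd[OF fne] rowof_hd[OF sne] by simp
  qed
  define L1 where "L1 = takeWhile (\<lambda>p. t \<le> fst p) L"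
  define L2 where "L2 = dropWhile (\<lambda>p. t \<le> fst p) L"
  have LL: "L = L1 @ L2" by (simp add: L1_def L2_def)
  have "sorted_wrt (\<ge>) (L1 @ L2)" using sL LL by simp
  then have sL1: "sorted_wrt (\<ge>) L1" by (simp add: sorted_wrt_append)
  have L1p: "\<forall>p\<in>set L1. snd p < fst p \<and> t \<le> fst p" using negL
    unfolding L1_def by (auto dest: set_takeWhileD)
  have L2p: "\<forall>p\<in>set L2. snd p < fst p \<and> fst p < t" using negL drop_lt[OF sL]
    unfolding L2_def by (auto dest: set_dropWhileD)
  obtain R1 S1 where RS1: "foldl row1_step ([], []) L1 = (R1, S1)" by (cases "foldl row1_step ([], []) L1")
  have I1: "Inv1 t L1 (R1, S1)" using phase1[OF sL1 L1p] RS1 by simp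
  have proj: "(rowof (fst (brsk_neg V)) 0, rowof (snd (brsk_neg V)) 0) = foldl row1_step (R1, S1) L2"
    using row1_foldl[OF i0 negL] bn LL RS1 by simp
  note p2 = phase2[OF L2p, of "(R1, S1)"]
  have pr1: "rowof (fst (brsk_neg V)) 0 = fst (foldl row1_step (R1, S1) L2)"
    using proj by (simp add: prod_eq_iff)
  have pr2: "rowof (snd (brsk_neg V)) 0 = snd (foldl row1_step (R1, S1) L2)"
    using proj by (simp add: prod_eq_iff)
  have eR: "cgel t (hd (fst (brsk_neg V))) = cgel t R1"
    using p2 pr1 rowof_hd[OF fne] by simp
  have eS: "cgel t (hd (snd (brsk_neg V))) = cgel t S1"
    using p2 pr2 rowof_hd[OF sne] by simp
  have S1: "cgel t S1 = length S1" "length R1 = length S1"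
    using I1 cgel_all by (auto simp: Inv1_def)
  have main: "h t + cltl t R1 \<le> h' t"
  proof (cases "cltl t R1 = 0")
    case True then show ?thesis using hh by simp
  next
    case False
    then obtain C where C: "is_chain C" "C \<subseteq> {(a, b). (b, a) \<in> set L1}" "cltl t R1 \<le> card C"
        "\<forall>p\<in>C. fst p < t \<and> t \<le> snd p"
      using I1 unfolding Inv1_def Jinv_def by auto
    have "set L1 \<subseteq> prod.swap ` set_mset V" using setL LL by auto
    then have "C \<subseteq> set_mset V" using C(2) by force
    then have "h t + card C \<le> h' t" using ch C by blast
    then show ?thesis using C by simp
  qed
  show "h t + cgel t (hd (snd (brsk_neg V))) \<le> cgel t (hd (fst (brsk_neg V))) + h' t"
    using eR eS S1 len_split[of R1 t] main by simp
qed



lemma K0: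
  assumes neg: "\<forall>p\<in>#V. fst p < snd p" and ne: "V \<noteq> {#}"
  shows "invL (brsk_neg V) \<and> fst (brsk_neg V) \<noteq> [] \<and> snd (brsk_neg V) \<noteq> []"
proof -
  define L where "L = rev (sorted_list_of_multiset (image_mset prod.swap V))"
  have bn: "brsk_neg V = foldl brsk_step ([], []) L" by (simp add: brsk_neg_def L_def)
  have setL: "set L = prod.swap ` set_mset V" by (simp add: L_def)
  have negL: "\<forall>p\<in>set L. snd p < fst p" using neg setL by auto
  have Lne: "L \<noteq> []" using ne setL by auto
  have i0: "invL ([], [])" by (simp add: invL_def)
  have iv: "invL (brsk_neg V)" and fne: "fst (brsk_neg V) \<noteq> []"
    using invL_foldl[OF i0 negL] Lne bn by auto
  moreover have "length (fst (brsk_neg V)) = length (snd (brsk_neg V))" using iv by (simp add: invL_def)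
  ultimately show ?thesis by auto
qed

lemma invL_last:
  assumes "invL N" "fst N \<noteq> []"
  shows "cgel t (last (fst N)) \<le> cgel t (last (snd N)) \<and> length (last (fst N)) = length (last (snd N))"
proof -
  have l: "length (fst N) = length (snd N)" using assms by (simp add: invL_def)
  then have sne: "snd N \<noteq> []" using assms by auto
  define k where "k = length (fst N) - 1"
  have "last (fst N) = rowof (fst N) k" "last (snd N) = rowof (snd N) k"
    using assms(2) sne l by (auto simp: k_def rowof_def last_conv_nth)
  then show ?thesis using assms(1) by (simp add: invL_def)
qed

lemma cge_img: "finite T \<Longrightarrow> cge t (image_mset f (mset_set T)) = card {p\<in>T. t \<le> f p}"
  by (simp add: cge_def filter_mset_image_mset)

lemma pair_le_cnt:
  assumes "finite A" "finite B" "pair_le (mset_set A) (mset_set B)"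
  shows "card {p\<in>A. t \<le> fst p} + card {p\<in>B. t \<le> snd p} \<le> card {p\<in>B. t \<le> fst p} + card {p\<in>A. t \<le> snd p}"
proof -
  have "cge t (image_mset fst (mset_set A) + image_mset snd (mset_set B)) \<le>
        cge t (image_mset fst (mset_set B) + image_mset snd (mset_set A))"
    using assms(3) unfolding pair_le_def diff_le_def mle_iff by blast
  then show ?thesis using assms(1,2) by (simp add: cge_img)
qed

lemma neg_h: "negative_pairs T \<Longrightarrow> finite T \<Longrightarrow> card {p\<in>T. t \<le> fst p} \<le> card {p\<in>T. t \<le> snd p}"
  by (rule card_mono) (auto simp: negative_pairs_def)

lemma pos_h: "positive_pairs W \<Longrightarrow> finite W \<Longrightarrow> card {p\<in>W. t \<le> snd p} \<le> card {p\<in>W. t \<le> fst p}"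
  by (rule card_mono) (auto simp: positive_pairs_def)

lemma chain_swap: "is_chain C \<Longrightarrow> is_chain (prod.swap ` C)"
  unfolding is_chain_def by auto

theorem lemma7p2:
  fixes T W :: "(nat \<times> nat) set" and U :: "(nat \<times> nat) multiset"
  assumes "finite T" and "\<forall>(a,b)\<in>T. 0 < a \<and> 0 < b" and "negative_pairs T"
      and "finite W" and "\<forall>(a,b)\<in>W. 0 < a \<and> 0 < b" and "positive_pairs W"
      and "\<forall>(a,b)\<in>set_mset U. 0 < a \<and> 0 < b"
      and "nonvanishing_pairs (set_mset U)" and "U \<noteq> {#}"
      and "mset_bounded_by T W U"
  shows "bitab_bounded_by T W (brsk U)"
proof -
  note fT = assms(1) and fW = assms(4) and nT = assms(3) and pW = assms(6)
  define Vn where "Vn = filter_mset (\<lambda>(a,b). a < b) U"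
  define Up where "Up = filter_mset (\<lambda>(a,b). a > b) U"
  define Vp where "Vp = image_mset prod.swap Up"
  define N where "N = brsk_neg Vn"
  define N' where "N' = brsk_neg Vp"
  define Pb where "Pb = fst N @ rev (snd N')"
  define Qb where "Qb = snd N @ rev (fst N')"
  have bU: "brsk U = (Pb, Qb)"
    by (simp add: brsk_def brsk_pos_def iota_bitab_def Let_def N_def N'_def Pb_def Qb_def Vn_def Up_def Vp_def)
  have negVn: "\<forall>p\<in>#Vn. fst p < snd p" by (auto simp: Vn_def)
  have negVp: "\<forall>p\<in>#Vp. fst p < snd p" by (auto simp: Vp_def Up_def)
  have ne: "Vn \<noteq> {#} \<or> Up \<noteq> {#}"
  proof -
    obtain x where x: "x \<in># U" using assms(9) by blast
    then have "fst x \<noteq> snd x" using assms(8) by (auto simp: nonvanishing_pairs_def)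
    then have "fst x < snd x \<or> fst x > snd x" by auto
    then show ?thesis
    proof
      assume "fst x < snd x"
      then have "x \<in># Vn" using x by (cases x) (simp add: Vn_def)
      then show ?thesis by auto
    next
      assume "fst x > snd x"
      then have "x \<in># Up" using x by (cases x) (simp add: Up_def)
      then show ?thesis by auto
    qed
  qed
  have bnd: "pair_le (mset_set T) (mset_set C) \<and> pair_le (mset_set C) (mset_set W)"
    if "is_chain C" "C \<subseteq> set_mset U" for C
    using assms(10) that unfolding mset_bounded_by_def by blast
  define hT1 where "hT1 t = card {p\<in>T. t \<le> fst p}" for t
  define hT2 where "hT2 t = card {p\<in>T. t \<le> snd p}" for t
  define hW1 where "hW1 t = card {p\<in>W. t \<le> fst p}" for t
  define hW2 where "hW2 t = card {p\<in>W. t \<le> snd p}" for t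
  have hT: "hT1 t \<le> hT2 t" for t using neg_h[OF nT fT] by (simp add: hT1_def hT2_def)
  have hW: "hW2 t \<le> hW1 t" for t using pos_h[OF pW fW] by (simp add: hW1_def hW2_def)
  have F12: "length (hd Qb) = length (hd Pb) \<and> (\<forall>t. hT1 t + cgel t (hd Qb) \<le> cgel t (hd Pb) + hT2 t)"
  proof (cases "Vn = {#}")
    case False
    have ch: "hT1 t + card C \<le> hT2 t"
      if C: "is_chain C" "C \<subseteq> set_mset Vn" "\<forall>p\<in>C. fst p < t \<and> t \<le> snd p" for C t
    proof -
      have fC: "finite C" using C by (simp add: is_chain_def)
      have "C \<subseteq> set_mset U" using C by (auto simp: Vn_def)
      then have "pair_le (mset_set T) (mset_set C)" using bnd C by blast
      from pair_le_cnt[OF fT fC this, of t]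
      have "hT1 t + card {p\<in>C. t \<le> snd p} \<le> card {p\<in>C. t \<le> fst p} + hT2 t"
        by (simp add: hT1_def hT2_def)
      moreover have "{p\<in>C. t \<le> snd p} = C" "{p\<in>C. t \<le> fst p} = {}" using C(3) by auto
      ultimately show ?thesis by simp
    qed
    note k = K[OF negVn False ch hT]
    have "hd Pb = hd (fst N)" "hd Qb = hd (snd N)" using k(3,4) by (auto simp: Pb_def Qb_def N_def)
    then show ?thesis using k(1,2) by (auto simp: N_def)
  next
    case True
    then have Upne: "Vp \<noteq> {#}" using ne by (simp add: Vp_def)
    have N0: "N = ([], [])" using True by (simp add: N_def brsk_neg_def)
    note k0 = K0[OF negVp Upne]
    have "hd Pb = last (snd N')" "hd Qb = last (fst N')" using k0 N0
      by (auto simp: Pb_def Qb_def N'_def hd_rev)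
    moreover have il: "cgel t (last (fst N')) \<le> cgel t (last (snd N')) \<and> length (last (fst N')) = length (last (snd N'))" for t
      using invL_last[of N' t] k0 unfolding N'_def by blast
    ultimately show ?thesis
    proof (intro conjI allI)
      fix t show "hT1 t + cgel t (hd Qb) \<le> cgel t (hd Pb) + hT2 t"
        using \<open>hd Pb = _\<close> \<open>hd Qb = _\<close> il[of t] hT[of t] by simp
    qed (use il in simp)
  qed
  have F34: "length (last Pb) = length (last Qb) \<and> (\<forall>t. cgel t (last Pb) + hW2 t \<le> hW1 t + cgel t (last Qb))"
  proof (cases "Up = {#}")
    case False
    then have Vpne: "Vp \<noteq> {#}" by (simp add: Vp_def)
    have ch: "hW2 t + card C \<le> hW1 t"
      if C: "is_chain C" "C \<subseteq> set_mset Vp" "\<forall>p\<in>C. fst p < t \<and> t \<le> snd p" for C t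
    proof -
      define D where "D = prod.swap ` C"
      have fC: "finite C" using C by (simp add: is_chain_def)
      have fD: "finite D" using fC by (simp add: D_def)
      have cD: "card D = card C" by (simp add: D_def card_image)
      have "D \<subseteq> set_mset U" using C by (auto simp: D_def Vp_def Up_def)
      then have "pair_le (mset_set D) (mset_set W)" using bnd chain_swap[OF C(1)] by (simp add: D_def)
      from pair_le_cnt[OF fD fW this, of t]
      have "card {p\<in>D. t \<le> fst p} + hW2 t \<le> hW1 t + card {p\<in>D. t \<le> snd p}"
        by (simp add: hW1_def hW2_def)
      moreover have "{p\<in>D. t \<le> fst p} = D" "{p\<in>D. t \<le> snd p} = {}" using C(3) by (auto simp: D_def)
      ultimately show ?thesis using cD by simp
    qed
    note k = K[OF negVp Vpne ch hW]
    have "last Pb = hd (snd N')" "last Qb = hd (fst N')" using k(3,4)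
      by (auto simp: Pb_def Qb_def N'_def last_rev)
    then show ?thesis using k(1,2) by (auto simp: N'_def add.commute)
  next
    case True
    then have Vnne: "Vn \<noteq> {#}" using ne by simp
    have N0: "N' = ([], [])" using True by (simp add: N'_def brsk_neg_def Vp_def)
    note k0 = K0[OF negVn Vnne]
    have "last Pb = last (fst N)" "last Qb = last (snd N)" using N0
      by (auto simp: Pb_def Qb_def)
    moreover have il: "cgel t (last (fst N)) \<le> cgel t (last (snd N)) \<and> length (last (fst N)) = length (last (snd N))" for t
      using invL_last[of N t] k0 unfolding N_def by blast
    ultimately show ?thesis
    proof (intro conjI allI)
      fix t show "cgel t (last Pb) + hW2 t \<le> hW1 t + cgel t (last Qb)"
        using \<open>last Pb = _\<close> \<open>last Qb = _\<close> il[of t] hW[of t] by simp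
    qed (use il in simp)
  qed
  show ?thesis
    using F12 F34 fT fW unfolding bU bitab_bounded_by_def diff_le_def mle_iff
    by (simp add: cge_img hT1_def hT2_def hW1_def hW2_def add.commute)
qed

end
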